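(* In the setting of the context, for every $N$-tuple of integers $\mathbf{i}=(i_1,\dots,i_N)$ with $0\le i_k\le\ell_k$, define \[ V_{\mathbf{i}}=\sum_{\mathbf{n}=\mathbf{0}}^{\mathbf{i}}\mathscr{D}_{\mathbf{n},\mathbf{i}}V^{\mathbf{n}},\qquad \mathscr{D}_{\mathbf{n},\mathbf{i}}=\frac{(-1)^{|\mathbf{n}|-|\mathbf{i}|}}{(|\mathbf{i}|+|\mathbf{n}|+\omega^\star)_{|\mathbf{i}|-|\mathbf{n}|}}\prod_{p=1}^N\binom{\ell_p-n_p}{\ell_p-i_p}\big(|\mathbf{i}|_1^{p-1}+|\mathbf{n}|_1^{p}+|\boldsymbol{\ell}|_{p+1}^N-a_p+\omega^\star\big)_{i_p-n_p}. \] Then $A^\star V_{\mathbf{i}}=\theta^\star_{|\mathbf{i}|}V_{\mathbf{i}}$.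
   Context: Notation: for $N$-tuples of integers, $|\mathbf{n}|_j^k=\sum_{p=j}^k n_p$ (equal to $0$ if $j>k$), $|\mathbf{n}|=|\mathbf{n}|_1^N$, $\mathbf{e}_p$ the $p$-th unit $N$-tuple, $\mathbf{0}=(0,\dots,0)$; $(x)_k=x(x+1)\cdots(x+k-1)$, $(x)_0=1$. A sum $\sum_{\mathbf{n}=\mathbf{a}}^{\mathbf{b}}$ means the sum over all $\mathbf{n}$ with $a_p\le n_p\le b_p$ for every $p$. Setting: $N\ge1$, $\boldsymbol{\ell}=(\ell_1,\dots,\ell_N)$ nonnegative integers, $\mathcal{V}=\mathbb{C}^{\ell_1+1}\otimes\cdots\otimes\mathbb{C}^{\ell_N+1}$ with basis $V^{\mathbf{n}}$, $0\le n_p\le\ell_p$; $V^{\mathbf{n}}=0$ if some $n_p<0$ or $n_p>\ell_p$. Scalars $\theta_0,\theta_0^\star,h,h^\star,\omega,\omega^\star,a_1,\dots,a_N\in\mathbb{C}$; $\theta_i=\theta_0+hi(i+\omega)$, $\theta^\star_i=\theta^\star_0+h^\star i(i+\omega^\star)$; $\xi_{\mathbf{n},p}=h(|\mathbf{n}|_1^{p-1}+|\mathbf{n}|_1^p+|\boldsymbol{\ell}|_p^N+a_p+\omega)n_p$, $\xi^\star_{\mathbf{n},p}=h^\star(|\mathbf{n}|_1^{p-1}+|\mathbf{n}|_1^p+|\boldsymbol{\ell}|_{p+1}^N-a_p+\omega^\star)(n_p-\ell_p)$. Operators: $A V^{\mathbf{n}}=\theta_{|\mathbf{n}|}V^{\mathbf{n}}+\sum_{p=1}^N\xi_{\mathbf{n}+\mathbf{e}_p,p}V^{\mathbf{n}+\mathbf{e}_p}$,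 $A^\star V^{\mathbf{n}}=\theta^\star_{|\mathbf{n}|}V^{\mathbf{n}}+\sum_{p=1}^N\xi^\star_{\mathbf{n}-\mathbf{e}_p,p}V^{\mathbf{n}-\mathbf{e}_p}$. Standing constraints: $h,h^\star\neq0$; $\omega,\omega^\star\notin\{-2|\boldsymbol{\ell}|+1,\dots,-1\}$; for each $i$, none of $a_i,\ a_i+\omega-\omega^\star,\ a_i-|\boldsymbol{\ell}|-\omega^\star,\ a_i+|\boldsymbol{\ell}|+\omega$ lies in $\{-\ell_i,\dots,-1\}$; and with $S^\pm(\ell,a)=\{\pm(a+k+\tfrac12(\omega-\omega^\star)):k=1,\dots,\ell\}$, for all $i,j$ and signs, $S^{\epsilon_i}(\ell_i,a_i)$ and $S^{\epsilon_j}(\ell_j,a_j)$ are in general position (one contains the other or their union is not a string). *)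

theory Defs
  imports Complex_Main
begin

text \<open>N-tuples of integers are functions nat => int, indices 1..N are relevant;
  tuples are normalised to be 0 outside {1..N}.\<close>

definition tsum :: "(nat \<Rightarrow> int) \<Rightarrow> nat \<Rightarrow> nat \<Rightarrow> int" where
  "tsum n j k = (\<Sum>q\<in>{j..k}. n q)"

definition lsum :: "(nat \<Rightarrow> nat) \<Rightarrow> nat \<Rightarrow> nat \<Rightarrow> int" where
  "lsum l j k = (\<Sum>q\<in>{j..k}. int (l q))"

definition tuple_box :: "nat \<Rightarrow> (nat \<Rightarrow> int) \<Rightarrow> (nat \<Rightarrow> int) \<Rightarrow> (nat \<Rightarrow> int) set" where
  "tuple_box N lo hi = {n. (\<forall>p\<in>{1..N}. lo p \<le> n p \<and> n p \<le> hi p) \<and> (\<forall>p. p \<notin> {1..N} \<longrightarrow> n p = 0)}"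

definition valid_idx :: "nat \<Rightarrow> (nat \<Rightarrow> nat) \<Rightarrow> (nat \<Rightarrow> int) set" where
  "valid_idx N l = tuple_box N (\<lambda>_. 0) (\<lambda>p. int (l p))"

definition unit_tuple :: "nat \<Rightarrow> nat \<Rightarrow> int" where
  "unit_tuple p = (\<lambda>q. if q = p then 1 else 0)"

text \<open>Vectors of V are coordinate functions on tuples (supported on valid_idx).
  basisV n is V^n, which is 0 if n is out of range.\<close>

definition basisV :: "nat \<Rightarrow> (nat \<Rightarrow> nat) \<Rightarrow> (nat \<Rightarrow> int) \<Rightarrow> (nat \<Rightarrow> int) \<Rightarrow> complex" where
  "basisV N l n = (\<lambda>m. if n \<in> valid_idx N l \<and> m = n then 1 else 0)"

definition theta_seq :: "complex \<Rightarrow> complex \<Rightarrow> complex \<Rightarrow> int \<Rightarrow> complex" where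
  "theta_seq t0 h w k = t0 + h * of_int k * (of_int k + w)"

definition xi_star :: "nat \<Rightarrow> (nat \<Rightarrow> nat) \<Rightarrow> complex \<Rightarrow> complex \<Rightarrow> (nat \<Rightarrow> complex)
    \<Rightarrow> (nat \<Rightarrow> int) \<Rightarrow> nat \<Rightarrow> complex" where
  "xi_star N l hs ws a n p =
     hs * (of_int (tsum n 1 (p - 1) + tsum n 1 p + lsum l (p + 1) N) - a p + ws)
        * of_int (n p - int (l p))"

definition Astar_basis :: "nat \<Rightarrow> (nat \<Rightarrow> nat) \<Rightarrow> complex \<Rightarrow> complex \<Rightarrow> complex \<Rightarrow> (nat \<Rightarrow> complex)
    \<Rightarrow> (nat \<Rightarrow> int) \<Rightarrow> (nat \<Rightarrow> int) \<Rightarrow> complex" where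
  "Astar_basis N l ts0 hs ws a n =
     (\<lambda>m. theta_seq ts0 hs ws (tsum n 1 N) * basisV N l n m
        + (\<Sum>p\<in>{1..N}. xi_star N l hs ws a (n - unit_tuple p) p * basisV N l (n - unit_tuple p) m))"

definition Astar :: "nat \<Rightarrow> (nat \<Rightarrow> nat) \<Rightarrow> complex \<Rightarrow> complex \<Rightarrow> complex \<Rightarrow> (nat \<Rightarrow> complex)
    \<Rightarrow> ((nat \<Rightarrow> int) \<Rightarrow> complex) \<Rightarrow> (nat \<Rightarrow> int) \<Rightarrow> complex" where
  "Astar N l ts0 hs ws a v =
     (\<lambda>m. \<Sum>n\<in>valid_idx N l. v n * Astar_basis N l ts0 hs ws a n m)"

definition Dcoef :: "nat \<Rightarrow> (nat \<Rightarrow> nat) \<Rightarrow> complex \<Rightarrow> (nat \<Rightarrow> complex)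
    \<Rightarrow> (nat \<Rightarrow> int) \<Rightarrow> (nat \<Rightarrow> int) \<Rightarrow> complex" where
  "Dcoef N l ws a n i =
     (-1) powi (tsum n 1 N - tsum i 1 N)
     / pochhammer (of_int (tsum i 1 N + tsum n 1 N) + ws) (nat (tsum i 1 N - tsum n 1 N))
     * (\<Prod>p\<in>{1..N}.
          of_nat (nat (int (l p) - n p) choose nat (int (l p) - i p))
          * pochhammer (of_int (tsum i 1 (p - 1) + tsum n 1 p + lsum l (p + 1) N) - a p + ws)
                       (nat (i p - n p)))"

definition Vvec :: "nat \<Rightarrow> (nat \<Rightarrow> nat) \<Rightarrow> complex \<Rightarrow> (nat \<Rightarrow> complex)
    \<Rightarrow> (nat \<Rightarrow> int) \<Rightarrow> (nat \<Rightarrow> int) \<Rightarrow> complex" where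
  "Vvec N l ws a i =
     (\<lambda>m. \<Sum>n\<in>tuple_box N (\<lambda>_. 0) i. Dcoef N l ws a n i * basisV N l n m)"

definition is_string :: "complex set \<Rightarrow> bool" where
  "is_string S \<longleftrightarrow> (\<exists>z m. S = {z + of_nat k | k. k \<le> m})"

definition Sset :: "complex \<Rightarrow> nat \<Rightarrow> complex \<Rightarrow> complex \<Rightarrow> complex \<Rightarrow> complex set" where
  "Sset eps ll a w ws = {eps * (a + of_nat k + (w - ws) / 2) | k. 1 \<le> k \<and> k \<le> ll}"

definition general_position :: "complex set \<Rightarrow> complex set \<Rightarrow> bool" where
  "general_position S T \<longleftrightarrow> S \<subseteq> T \<or> T \<subseteq> S \<or> \<not> is_string (S \<union> T)"

end

theory Submission
  imports Defs "HOL-Library.FuncSet"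
begin

lemma finite_tuple_box: "finite (tuple_box N lo hi)"
proof -
  let ?f = "\<lambda>n::nat\<Rightarrow>int. restrict n {1..N}"
  have sub: "?f ` tuple_box N lo hi \<subseteq> PiE {1..N} (\<lambda>p. {lo p..hi p})"
    by (auto simp: tuple_box_def PiE_iff)
  have fin: "finite (PiE {1..N} (\<lambda>p. {lo p..hi p}))"
    by (rule finite_PiE) auto
  have inj: "inj_on ?f (tuple_box N lo hi)"
  proof (rule inj_onI)
    fix x y assume x: "x \<in> tuple_box N lo hi" and y: "y \<in> tuple_box N lo hi" and e: "?f x = ?f y"
    show "x = y"
    proof
      fix p show "x p = y p"
      proof (cases "p \<in> {1..N}")
        case True then show ?thesis using e by (metis restrict_apply')
      next
        case False then show ?thesis using x y by (simp add: tuple_box_def)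
      qed
    qed
  qed
  show ?thesis using finite_subset[OF sub fin] inj finite_imageD by blast
qed

lemma tsum_add_unit: "1 \<le> p \<Longrightarrow> tsum (\<lambda>x. m x + unit_tuple p x) 1 q = tsum m 1 q + (if p \<le> q then 1 else 0)"
  by (simp add: tsum_def unit_tuple_def sum.distrib)

lemma poch_diff: "of_nat (Suc d) * pochhammer (u+1) d = pochhammer (u+1) (Suc d) - pochhammer (u::complex) (Suc d)"
  by (simp only: pochhammer_rec'[of "u+1"] pochhammer_rec[of u]) (simp add: algebra_simps)

lemma poch_diff2: "u * pochhammer (u+1) d = pochhammer (u::complex) (Suc d)"
  by (simp add: pochhammer_rec)

lemma telescope: "(\<Sum>p\<in>{1..(N::nat)}. H p - H (p - 1)) = H N - (H 0 :: complex)"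
  by (induction N) (auto simp: sum.atLeast_Suc_atMost_Suc_shift)

lemma shift_eq: "(m = n - unit_tuple p) \<longleftrightarrow> (n = (\<lambda>x. m x + unit_tuple p x))"
  by (auto simp: fun_eq_iff)

lemma Astar_eval:
  "Astar N l ts0 hs ws a v m =
     (if m \<in> valid_idx N l then theta_seq ts0 hs ws (tsum m 1 N) * v m else 0)
   + (\<Sum>p\<in>{1..N}. if m \<in> valid_idx N l \<and> (\<lambda>x. m x + unit_tuple p x) \<in> valid_idx N l
        then xi_star N l hs ws a m p * v (\<lambda>x. m x + unit_tuple p x) else 0)"
proof -
  let ?V = "valid_idx N l"
  have fin: "finite ?V" unfolding valid_idx_def by (rule finite_tuple_box)
  have "Astar N l ts0 hs ws a v m =
     (\<Sum>n\<in>?V. v n * (theta_seq ts0 hs ws (tsum n 1 N) * basisV N l n m))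
     + (\<Sum>n\<in>?V. \<Sum>p\<in>{1..N}. v n * (xi_star N l hs ws a (n - unit_tuple p) p * basisV N l (n - unit_tuple p) m))"
    unfolding Astar_def Astar_basis_def by (simp add: distrib_left sum.distrib sum_distrib_left)
  also have "(\<Sum>n\<in>?V. v n * (theta_seq ts0 hs ws (tsum n 1 N) * basisV N l n m))
      = (\<Sum>n\<in>?V. if n = m then theta_seq ts0 hs ws (tsum m 1 N) * v m else 0)"
    by (rule sum.cong) (auto simp: basisV_def)
  also have "\<dots> = (if m \<in> ?V then theta_seq ts0 hs ws (tsum m 1 N) * v m else 0)"
    using fin by (simp add: sum.delta')
  also have "(\<Sum>n\<in>?V. \<Sum>p\<in>{1..N}. v n * (xi_star N l hs ws a (n - unit_tuple p) p * basisV N l (n - unit_tuple p) m))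
     = (\<Sum>p\<in>{1..N}. \<Sum>n\<in>?V. v n * (xi_star N l hs ws a (n - unit_tuple p) p * basisV N l (n - unit_tuple p) m))"
    by (rule sum.swap)
  also have "\<dots> = (\<Sum>p\<in>{1..N}. if m \<in> valid_idx N l \<and> (\<lambda>x. m x + unit_tuple p x) \<in> valid_idx N l
        then xi_star N l hs ws a m p * v (\<lambda>x. m x + unit_tuple p x) else 0)"
  proof (rule sum.cong[OF refl])
    fix p
    let ?mp = "\<lambda>x. m x + unit_tuple p x"
    have "(\<Sum>n\<in>?V. v n * (xi_star N l hs ws a (n - unit_tuple p) p * basisV N l (n - unit_tuple p) m))
       = (\<Sum>n\<in>?V. if n = ?mp then (if m \<in> ?V then xi_star N l hs ws a m p * v ?mp else 0) else 0)"
    proof (rule sum.cong[OF refl])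
      fix n assume "n \<in> ?V"
      show "v n * (xi_star N l hs ws a (n - unit_tuple p) p * basisV N l (n - unit_tuple p) m)
         = (if n = ?mp then (if m \<in> ?V then xi_star N l hs ws a m p * v ?mp else 0) else 0)"
      proof (cases "n = ?mp")
        case True
        then have "n - unit_tuple p = m" by (auto simp: fun_eq_iff)
        then show ?thesis using True by (auto simp: basisV_def)
      next
        case False
        then have "m \<noteq> n - unit_tuple p" using shift_eq by blast
        then show ?thesis using False by (auto simp: basisV_def)
      qed
    qed
    also have "\<dots> = (if m \<in> valid_idx N l \<and> ?mp \<in> valid_idx N l
        then xi_star N l hs ws a m p * v ?mp else 0)"
      using fin by (simp add: sum.delta')
    finally show "(\<Sum>n\<in>?V. v n * (xi_star N l hs ws a (n - unit_tuple p) p * basisV N l (n - unit_tuple p) m))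
       = (if m \<in> valid_idx N l \<and> ?mp \<in> valid_idx N l
        then xi_star N l hs ws a m p * v ?mp else 0)" .
  qed
  finally show ?thesis .
qed

lemma Vvec_eval:
  assumes "i \<in> valid_idx N l"
  shows "Vvec N l ws a i m = (if m \<in> tuple_box N (\<lambda>_. 0) i then Dcoef N l ws a m i else 0)"
proof -
  let ?B = "tuple_box N (\<lambda>_. 0) i"
  have sub: "?B \<subseteq> valid_idx N l" using assms by (force simp: valid_idx_def tuple_box_def)
  have "Vvec N l ws a i m = (\<Sum>n\<in>?B. if n = m then Dcoef N l ws a m i else 0)"
    unfolding Vvec_def by (rule sum.cong) (use sub in \<open>auto simp: basisV_def\<close>)
  also have "\<dots> = (if m \<in> ?B then Dcoef N l ws a m i else 0)" using finite_tuple_box by (simp add: sum.delta')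
  finally show ?thesis .
qed

definition Ppart :: "nat \<Rightarrow> (nat \<Rightarrow> nat) \<Rightarrow> complex \<Rightarrow> (nat \<Rightarrow> complex)
    \<Rightarrow> (nat \<Rightarrow> int) \<Rightarrow> (nat \<Rightarrow> int) \<Rightarrow> complex" where
  "Ppart N l ws a n i = (\<Prod>p\<in>{1..N}.
          of_nat (nat (int (l p) - n p) choose nat (int (l p) - i p))
          * pochhammer (of_int (tsum i 1 (p - 1) + tsum n 1 p + lsum l (p + 1) N) - a p + ws)
                       (nat (i p - n p)))"

lemma Dcoef_Ppart: "Dcoef N l ws a n i = (-1) powi (tsum n 1 N - tsum i 1 N)
     / pochhammer (of_int (tsum i 1 N + tsum n 1 N) + ws) (nat (tsum i 1 N - tsum n 1 N))
     * Ppart N l ws a n i"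
  by (simp add: Dcoef_def Ppart_def)

lemma xi_D_zero:
  assumes p: "p \<in> {1..N}" and e: "m p = i p" and il: "i p \<le> int (l p)"
  shows "xi_star N l hs ws a m p * Ppart N l ws a (\<lambda>x. m x + unit_tuple p x) i = 0"
proof (cases "m p = int (l p)")
  case True
  then show ?thesis by (simp add: xi_star_def)
next
  case False
  have "nat (int (l p) - (m p + 1)) < nat (int (l p) - i p)" using False e il by linarith
  then have z: "(nat (int (l p) - (m p + 1)) choose nat (int (l p) - i p)) = 0" by simp
  have "Ppart N l ws a (\<lambda>x. m x + unit_tuple p x) i = 0"
    unfolding Ppart_def
    by (rule prod_zero) (use p z in \<open>auto simp: unit_tuple_def intro!: bexI[of _ p]\<close>)
  then show ?thesis by simp
qed

lemma tsum_last: "1 \<le> p \<Longrightarrow> tsum x 1 p = tsum x 1 (p - 1) + x p"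
  unfolding tsum_def by (cases p) (auto simp: sum.cl_ivl_Suc)

lemma tsum_zero: "tsum x 1 0 = 0"
  unfolding tsum_def by simp

lemma core_sum:
  assumes m: "m \<in> tuple_box N (\<lambda>_. 0) i" and iv: "i \<in> valid_idx N l"
  shows "(\<Sum>p\<in>{1..N}. xi_star N l hs ws a m p * Ppart N l ws a (\<lambda>x. m x + unit_tuple p x) i)
     = - hs * of_int (tsum i 1 N - tsum m 1 N) * Ppart N l ws a m i"
proof -
  define u where "u q = of_int (tsum i 1 (q - 1) + tsum m 1 q + lsum l (q + 1) N) - a q + ws" for q
  define d where "d q = nat (i q - m q)" for q
  define U where "U q = pochhammer (u q) (d q)" for q
  define V where "V q = pochhammer (u q + 1) (d q)" for q
  define cc where "cc q = (of_nat (nat (int (l q) - m q) choose nat (int (l q) - i q)) :: complex)" for q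
  define C where "C = (\<Prod>q\<in>{1..N}. cc q)"
  define G where "G p = (\<Prod>q\<in>{1..N}. if q \<le> p then U q else V q)" for p
  define H where "H p = of_int (tsum i 1 p - tsum m 1 p) * G p" for p
  have mi: "0 \<le> m q \<and> m q \<le> i q" if "q \<in> {1..N}" for q using m that by (auto simp: tuple_box_def)
  have il: "0 \<le> i q \<and> i q \<le> int (l q)" if "q \<in> {1..N}" for q using iv that by (auto simp: valid_idx_def tuple_box_def)
  have per: "xi_star N l hs ws a m p * Ppart N l ws a (\<lambda>x. m x + unit_tuple p x) i = - hs * C * (H p - H (p - 1))"
    if p: "p \<in> {1..N}" for p
  proof (cases "m p = i p")
    case True
    have "G p = G (p - 1)" unfolding G_def
    proof (rule prod.cong[OF refl])
      fix q assume "q \<in> {1..N}"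
      then show "(if q \<le> p then U q else V q) = (if q \<le> p - 1 then U q else V q)"
        by (cases "q = p") (auto simp: U_def V_def d_def True)
    qed
    moreover have "tsum i 1 p - tsum m 1 p = tsum i 1 (p-1) - tsum m 1 (p-1)"
      using tsum_last[of p i] tsum_last[of p m] p True by simp
    ultimately have "H p = H (p-1)" by (simp add: H_def)
    with xi_D_zero[of p N m i l hs ws a, OF p True] il[OF p] show ?thesis by simp
  next
    case False
    have lt: "m p < i p" using False mi[OF p] by simp
    have "d p > 0" using lt by (simp add: d_def)
    then obtain d' where dp: "d p = Suc d'" using gr0_implies_Suc by blast
    have p1: "1 \<le> p" and pN: "p \<le> N" using p by auto
    let ?mp = "\<lambda>x. m x + unit_tuple p x"
    define cc' where "cc' = (of_nat (nat (int (l p) - (m p + 1)) choose nat (int (l p) - i p)) :: complex)"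
    define Dl where "Dl = (of_int (tsum i 1 (p - 1) - tsum m 1 (p - 1)) :: complex)"
    define R1 where "R1 = (\<Prod>q\<in>{1..N} - {p}. cc q)"
    define R2 where "R2 = (\<Prod>q\<in>{1..N} - {p}. if q < p then U q else V q)"
    define F where "F q = of_nat (nat (int (l q) - ?mp q) choose nat (int (l q) - i q))
          * pochhammer (of_int (tsum i 1 (q - 1) + tsum ?mp 1 q + lsum l (q + 1) N) - a q + ws)
                       (nat (i q - ?mp q))" for q
    have Fp: "F p = cc' * pochhammer (u p + 1) d'"
    proof -
      have "nat (i p - ?mp p) = d'" using dp by (simp add: unit_tuple_def d_def)
      moreover have "of_int (tsum i 1 (p - 1) + tsum ?mp 1 p + lsum l (p + 1) N) - a p + ws = u p + 1"
        using tsum_add_unit[OF p1, of m p] by (simp add: u_def)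
      ultimately show ?thesis by (simp add: F_def cc'_def unit_tuple_def)
    qed
    have Fq: "F q = cc q * (if q < p then U q else V q)" if q: "q \<in> {1..N} - {p}" for q
    proof -
      have mq: "?mp q = m q" using q by (simp add: unit_tuple_def)
      have "of_int (tsum i 1 (q - 1) + tsum ?mp 1 q + lsum l (q + 1) N) - a q + ws
         = (if q < p then u q else u q + 1)"
        using tsum_add_unit[OF p1, of m q] q by (auto simp: u_def)
      then show ?thesis using mq by (auto simp: F_def cc_def U_def V_def d_def)
    qed
    have "Ppart N l ws a ?mp i = F p * (\<Prod>q\<in>{1..N} - {p}. F q)"
      unfolding Ppart_def F_def[symmetric] using p by (simp add: prod.remove)
    also have "(\<Prod>q\<in>{1..N} - {p}. F q) = R1 * R2"
      unfolding R1_def R2_def prod.distrib[symmetric] by (rule prod.cong) (auto simp: Fq)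
    finally have PP: "Ppart N l ws a ?mp i = cc' * pochhammer (u p + 1) d' * (R1 * R2)" using Fp by simp
    have xi: "xi_star N l hs ws a m p = hs * (u p - Dl) * of_int (m p - int (l p))"
      unfolding xi_star_def u_def Dl_def by (simp add: algebra_simps)
    have binom: "of_int (m p - int (l p)) * cc' = - of_nat (Suc d') * cc p"
    proof -
      define n where "n = nat (int (l p) - m p)"
      define k where "k = nat (int (l p) - i p)"
      have "(n - k) * (n choose k) = n * ((n - 1) choose k)" by (rule binomial_absorb_comp)
      moreover have "n - k = Suc d'" using dp mi[OF p] il[OF p] by (simp add: n_def k_def d_def)
      moreover have "n - 1 = nat (int (l p) - (m p + 1))" by (simp add: n_def)
      moreover have "of_int (m p - int (l p)) = - (of_nat n :: complex)" using mi[OF p] il[OF p] by (simp add: n_def)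
      ultimately show ?thesis unfolding cc'_def cc_def k_def[symmetric] n_def[symmetric]
        by (metis (no_types, lifting) mult_minus_left of_nat_mult)
    qed
    have pd1: "of_nat (Suc d') * pochhammer (u p + 1) d' = V p - U p"
      using poch_diff[of d' "u p"] dp by (simp add: U_def V_def)
    have pd2: "u p * pochhammer (u p + 1) d' = U p"
      using poch_diff2[of "u p" d'] dp by (simp add: U_def)
    have Dle: "(of_int (tsum i 1 p - tsum m 1 p) :: complex) = Dl + of_nat (Suc d')"
    proof -
      have "of_int (i p - m p) = (of_nat (Suc d') :: complex)" using dp lt unfolding d_def
        by (metis of_int_of_nat_eq int_nat_eq less_le_not_le diff_gt_0_iff_gt)
      then show ?thesis using tsum_last[OF p1, of i] tsum_last[OF p1, of m] unfolding Dl_def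
        by (simp add: algebra_simps)
    qed
    have Gp: "G p = U p * R2"
    proof -
      have "G p = (if p \<le> p then U p else V p) * (\<Prod>q\<in>{1..N} - {p}. if q \<le> p then U q else V q)"
        unfolding G_def using p by (simp add: prod.remove)
      also have "(\<Prod>q\<in>{1..N} - {p}. if q \<le> p then U q else V q) = R2"
        unfolding R2_def by (rule prod.cong) auto
      finally show ?thesis by simp
    qed
    have Gp1: "G (p - 1) = V p * R2"
    proof -
      have "G (p - 1) = (if p \<le> p - 1 then U p else V p) * (\<Prod>q\<in>{1..N} - {p}. if q \<le> p - 1 then U q else V q)"
        unfolding G_def using p by (simp add: prod.remove)
      also have "(\<Prod>q\<in>{1..N} - {p}. if q \<le> p - 1 then U q else V q) = R2"
        unfolding R2_def by (rule prod.cong) auto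
      moreover have "\<not> p \<le> p - 1" using p1 by simp
      ultimately show ?thesis by simp
    qed
    have Cd: "C = cc p * R1" unfolding C_def R1_def using p by (simp add: prod.remove)
    have "xi_star N l hs ws a m p * Ppart N l ws a ?mp i
       = hs * (u p - Dl) * (of_int (m p - int (l p)) * cc') * pochhammer (u p + 1) d' * R1 * R2"
      unfolding xi PP by (simp add: mult_ac)
    also have "\<dots> = - hs * (cc p * R1) * ((u p * pochhammer (u p + 1) d') * of_nat (Suc d')
                    - Dl * (of_nat (Suc d') * pochhammer (u p + 1) d')) * R2"
      unfolding binom by (simp add: algebra_simps)
    also have "\<dots> = - hs * C * ((Dl + of_nat (Suc d')) * U p * R2 - Dl * (V p * R2))"
      unfolding pd1 pd2 Cd by (simp add: algebra_simps)
    also have "\<dots> = - hs * C * (H p - H (p - 1))"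
      unfolding H_def Gp Gp1 Dle[symmetric] using tsum_last[OF p1, of i] tsum_last[OF p1, of m] Dl_def
      by (simp add: mult_ac)
    finally show ?thesis .
  qed
  have "(\<Sum>p\<in>{1..N}. xi_star N l hs ws a m p * Ppart N l ws a (\<lambda>x. m x + unit_tuple p x) i)
      = (\<Sum>p\<in>{1..N}. - hs * C * (H p - H (p - 1)))" by (rule sum.cong) (auto simp: per)
  also have "\<dots> = - hs * C * (H N - H 0)" using telescope[of H N] by (simp only: sum_distrib_left[symmetric])
  also have "H 0 = 0" using tsum_zero[of i] tsum_zero[of m] by (simp add: H_def)
  also have "G N = (\<Prod>q\<in>{1..N}. U q)" unfolding G_def by (rule prod.cong) auto
  then have "H N = of_int (tsum i 1 N - tsum m 1 N) * (\<Prod>q\<in>{1..N}. U q)" by (simp add: H_def)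
  also have "Ppart N l ws a m i = C * (\<Prod>q\<in>{1..N}. U q)"
    unfolding Ppart_def C_def U_def cc_def u_def d_def by (simp add: prod.distrib)
  ultimately show ?thesis by (simp add: mult_ac)
qed

theorem mainTheorem4:
  fixes N :: nat and l :: "nat \<Rightarrow> nat"
    and t0 ts0 h hs w ws :: complex and a :: "nat \<Rightarrow> complex"
    and i :: "nat \<Rightarrow> int"
  assumes N1: "N \<ge> 1"
    and h_nz: "h \<noteq> 0" and hs_nz: "hs \<noteq> 0"
    and w_ok: "\<forall>k::nat. 1 \<le> k \<and> k \<le> 2 * nat (lsum l 1 N) - 1 \<longrightarrow> w \<noteq> - of_nat k"
    and ws_ok: "\<forall>k::nat. 1 \<le> k \<and> k \<le> 2 * nat (lsum l 1 N) - 1 \<longrightarrow> ws \<noteq> - of_nat k"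
    and a_ok: "\<forall>p\<in>{1..N}. \<forall>k::nat. 1 \<le> k \<and> k \<le> l p \<longrightarrow>
                 a p \<noteq> - of_nat k \<and> a p + w - ws \<noteq> - of_nat k \<and>
                 a p - of_int (lsum l 1 N) - ws \<noteq> - of_nat k \<and>
                 a p + of_int (lsum l 1 N) + w \<noteq> - of_nat k"
    and gen_pos: "\<forall>p\<in>{1..N}. \<forall>q\<in>{1..N}. \<forall>e1\<in>{1, -1}. \<forall>e2\<in>{1, -1}.
                 general_position (Sset e1 (l p) (a p) w ws) (Sset e2 (l q) (a q) w ws)"
    and i_valid: "i \<in> valid_idx N l"
  shows "Astar N l ts0 hs ws a (Vvec N l ws a i)
           = (\<lambda>m. theta_seq ts0 hs ws (tsum i 1 N) * Vvec N l ws a i m)"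
proof (rule ext)
  fix m
  let ?B = "tuple_box N (\<lambda>_. 0) i"
  let ?V = "valid_idx N l"
  let ?v = "Vvec N l ws a i"
  let ?mp = "\<lambda>p x. m x + unit_tuple p x"
  let ?I = "tsum i 1 N" and ?M = "tsum m 1 N"
  have sub: "?B \<subseteq> ?V" using i_valid by (force simp: valid_idx_def tuple_box_def)
  have v: "?v n = (if n \<in> ?B then Dcoef N l ws a n i else 0)" for n
    by (rule Vvec_eval[OF i_valid])
  have il: "0 \<le> i q \<and> i q \<le> int (l q)" if "q \<in> {1..N}" for q
    using i_valid that by (auto simp: valid_idx_def tuple_box_def)
  have mp_out: "?mp p q = m q" if "q \<noteq> p" for p q using that by (simp add: unit_tuple_def)
  have mp_in: "?mp p p = m p + 1" for p by (simp add: unit_tuple_def)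
  show "Astar N l ts0 hs ws a ?v m = theta_seq ts0 hs ws ?I * ?v m"
  proof (cases "m \<in> ?B")
    case False
    have z: "(if m \<in> ?V \<and> ?mp p \<in> ?V then xi_star N l hs ws a m p * ?v (?mp p) else 0) = 0"
      if p: "p \<in> {1..N}" for p
    proof (cases "m \<in> ?V")
      case True
      have "?mp p \<notin> ?B"
      proof
        assume mpB: "?mp p \<in> ?B"
        have "m \<in> ?B" unfolding tuple_box_def
        proof (safe)
          fix q assume q: "q \<in> {1..N}"
          show "0 \<le> m q" using True q by (auto simp: valid_idx_def tuple_box_def)
          from mpB q have "m q + unit_tuple p q \<le> i q" unfolding tuple_box_def by blast
          moreover have "0 \<le> unit_tuple p q" by (simp add: unit_tuple_def)
          ultimately show "m q \<le> i q" by linarith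
        next
          fix q assume "q \<notin> {1..N}" then show "m q = 0" using True by (auto simp: valid_idx_def tuple_box_def)
        qed
        with False show False by simp
      qed
      then show ?thesis by (simp add: v)
    qed simp
    show ?thesis using False by (simp add: Astar_eval v z)
  next
    case True
    have mV: "m \<in> ?V" using True sub by blast
    have mi: "0 \<le> m q \<and> m q \<le> i q" if "q \<in> {1..N}" for q using True that by (auto simp: tuple_box_def)
    have trm: "(if m \<in> ?V \<and> ?mp p \<in> ?V then xi_star N l hs ws a m p * ?v (?mp p) else 0)
        = xi_star N l hs ws a m p * Dcoef N l ws a (?mp p) i" if p: "p \<in> {1..N}" for p
    proof (cases "m p < i p")
      case True
      have "?mp p \<in> ?B" using \<open>m \<in> ?B\<close> True p unfolding tuple_box_def
        by (auto simp: unit_tuple_def)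
      then show ?thesis using mV sub by (auto simp: v)
    next
      case False
      then have e: "m p = i p" using mi[OF p] by simp
      have "?mp p \<notin> ?B" using e p by (auto simp: tuple_box_def unit_tuple_def intro!: bexI[of _ p])
      moreover have "xi_star N l hs ws a m p * Dcoef N l ws a (?mp p) i = 0"
        using xi_D_zero[of p N m i l hs ws a, OF p e] il[OF p]
        by (simp add: Dcoef_Ppart)
      ultimately show ?thesis by (auto simp: v)
    qed
    have "Astar N l ts0 hs ws a ?v m = theta_seq ts0 hs ws ?M * Dcoef N l ws a m i
        + (\<Sum>p\<in>{1..N}. xi_star N l hs ws a m p * Dcoef N l ws a (?mp p) i)"
    proof -
      have "Astar N l ts0 hs ws a ?v m = (if m \<in> ?V then theta_seq ts0 hs ws ?M * ?v m else 0)
        + (\<Sum>p\<in>{1..N}. if m \<in> ?V \<and> ?mp p \<in> ?V then xi_star N l hs ws a m p * ?v (?mp p) else 0)"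
        by (rule Astar_eval)
      also have "(\<Sum>p\<in>{1..N}. if m \<in> ?V \<and> ?mp p \<in> ?V then xi_star N l hs ws a m p * ?v (?mp p) else 0)
          = (\<Sum>p\<in>{1..N}. xi_star N l hs ws a m p * Dcoef N l ws a (?mp p) i)"
        by (rule sum.cong[OF refl], rule trm, assumption)
      also have "(if m \<in> ?V then theta_seq ts0 hs ws ?M * ?v m else 0) = theta_seq ts0 hs ws ?M * Dcoef N l ws a m i"
        using mV True by (simp add: v)
      finally show ?thesis .
    qed
    also have "\<dots> = theta_seq ts0 hs ws ?I * Dcoef N l ws a m i"
    proof (cases "m = i")
      case True
      have "xi_star N l hs ws a m p * Dcoef N l ws a (?mp p) i = 0" if p: "p \<in> {1..N}" for p
        using xi_D_zero[of p N m i l hs ws a, OF p] il[OF p] True by (simp add: Dcoef_Ppart)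
      then have "(\<Sum>p\<in>{1..N}. xi_star N l hs ws a m p * Dcoef N l ws a (?mp p) i) = 0"
        by (intro sum.neutral) blast
      then show ?thesis using True by simp
    next
      case False
      have ex: "\<exists>q\<in>{1..N}. m q < i q"
      proof (rule ccontr)
        assume "\<not> ?thesis"
        then have "m q = i q" for q
          using mi i_valid \<open>m \<in> ?B\<close> by (cases "q \<in> {1..N}") (force simp: valid_idx_def tuple_box_def)+
        with False show False by auto
      qed
      have MI: "?M < ?I" unfolding tsum_def
        by (rule sum_strict_mono_ex1) (use mi ex in auto)
      have M0: "0 \<le> ?M" unfolding tsum_def by (rule sum_nonneg) (use mi in auto)
      have IL: "?I \<le> lsum l 1 N" unfolding tsum_def lsum_def by (rule sum_mono) (use il in auto)
      define s where "s = of_int (?I + ?M) + ws"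
      define k where "k = nat (?I - ?M)"
      have "k > 0" using MI by (simp add: k_def)
      then obtain k' where kk: "k = Suc k'" using gr0_implies_Suc by blast
      have s0: "s \<noteq> 0"
      proof
        assume "s = 0"
        then have "ws = - of_int (?I + ?M)" unfolding s_def by (simp add: add_eq_0_iff)
        moreover have "of_int (?I + ?M) = (of_nat (nat (?I + ?M)) :: complex)" using M0 MI by simp
        ultimately have "ws = - of_nat (nat (?I + ?M))" by (metis (no_types))
        moreover have "1 \<le> nat (?I + ?M) \<and> nat (?I + ?M) \<le> 2 * nat (lsum l 1 N) - 1"
          using M0 MI IL by linarith
        ultimately show False using ws_ok by blast
      qed
      define P where "P = pochhammer (s + 1) k'"
      define E where "E = ((-1) powi (?M - ?I) :: complex)"
      define X where "X = Ppart N l ws a m i"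
      have Dm: "Dcoef N l ws a m i = E / (s * P) * X"
        unfolding Dcoef_Ppart E_def X_def P_def s_def
        using kk[unfolded k_def] by (simp add: pochhammer_rec add.commute)
      have Dmp: "Dcoef N l ws a (?mp p) i = - E / P * Ppart N l ws a (?mp p) i" if p: "p \<in> {1..N}" for p
      proof -
        have t: "tsum (?mp p) 1 N = ?M + 1" using tsum_add_unit[of p m N] p by simp
        have n: "nat (?I - (?M + 1)) = k'" using kk unfolding k_def by simp
        have "?M + 1 - ?I = (?M - ?I) + 1" by simp
        then have "(-1) powi (?M + 1 - ?I) = (-1::complex) powi (?M - ?I) * (-1)"
          by (simp only:) (rule power_int_add_1, simp)
        then have pw: "(-1) powi (?M + 1 - ?I) = - E" unfolding E_def by simp
        have arg: "of_int (?I + (?M + 1)) + ws = s + 1" unfolding s_def by simp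
        show ?thesis by (simp only: Dcoef_Ppart t n pw arg P_def)
      qed
      have "(\<Sum>p\<in>{1..N}. xi_star N l hs ws a m p * Dcoef N l ws a (?mp p) i)
          = - E / P * (\<Sum>p\<in>{1..N}. xi_star N l hs ws a m p * Ppart N l ws a (?mp p) i)"
        by (simp add: sum_distrib_left Dmp mult_ac)
      also have "\<dots> = - E / P * (- hs * of_int (?I - ?M) * X)"
        using core_sum[OF True i_valid] X_def by simp
      finally have S: "(\<Sum>p\<in>{1..N}. xi_star N l hs ws a m p * Dcoef N l ws a (?mp p) i)
          = E / P * hs * of_int (?I - ?M) * X" by simp
      have th: "theta_seq ts0 hs ws ?M - theta_seq ts0 hs ws ?I = - hs * of_int (?I - ?M) * s"
        unfolding theta_seq_def s_def by (simp add: algebra_simps)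
      have "theta_seq ts0 hs ws ?M * Dcoef N l ws a m i + E / P * hs * of_int (?I - ?M) * X
          = theta_seq ts0 hs ws ?I * Dcoef N l ws a m i"
      proof (cases "P = 0")
        case True then show ?thesis by (simp add: Dm)
      next
        case False
        have "theta_seq ts0 hs ws ?M * Dcoef N l ws a m i - theta_seq ts0 hs ws ?I * Dcoef N l ws a m i
            = (theta_seq ts0 hs ws ?M - theta_seq ts0 hs ws ?I) * Dcoef N l ws a m i"
          by (simp add: left_diff_distrib)
        also have "\<dots> = - hs * of_int (?I - ?M) * s * (E / (s * P) * X)"
          by (simp only: th Dm)
        also have "\<dots> = - (E / P * hs * of_int (?I - ?M) * X)"
          using s0 False by (simp add: field_simps)
        finally show ?thesis by (simp add: algebra_simps)
      qed
      then show ?thesis using S by simp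
    qed
    finally show ?thesis using True by (simp add: v)
  qed
qed

end
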